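(* Let $t$ be a positive integer and let $G_t$ be the labeling of the complete graph $K_{2t}$ in which the edges of a fixed perfect matching ($t$ pairwise disjoint edges) are labeled $-$ and all other edges are labeled $+$. If $\mathcal{C}$ is a clustering (partition of the vertex set) of $G_t$ with more than one cluster, then some vertex of $G_t$ has at least $t-1$ errors in $\mathcal{C}$.
   Context: An error at a vertex $v$ in a clustering is an edge incident to $v$ that is either a $+$ edge whose endpoints lie in different clusters or a $-$ edge whose endpoints lie in the same cluster. *)

theory Defs
  imports Main "HOL-Library.Disjoint_Sets"
begin

definition perfect_matching :: "'a set \<Rightarrow> 'a set set \<Rightarrow> bool" where
  "perfect_matching V M \<longleftrightarrow> partition_on V M \<and> (\<forall>e\<in>M. card e = 2)"

text \<open>Labeling G_t of the complete graph on V: edge {u,v} is labeled minus iff it lies in M,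
  otherwise plus.\<close>
definition minus_edge :: "'a set set \<Rightarrow> 'a \<Rightarrow> 'a \<Rightarrow> bool" where
  "minus_edge M u v \<longleftrightarrow> {u, v} \<in> M"

definition same_cluster :: "'a set set \<Rightarrow> 'a \<Rightarrow> 'a \<Rightarrow> bool" where
  "same_cluster C u v \<longleftrightarrow> (\<exists>X\<in>C. u \<in> X \<and> v \<in> X)"

text \<open>Errors at v in clustering C: edges {v,u} of the complete graph on V that are plus edges
  between different clusters or minus edges inside one cluster (identified with the other endpoint u).\<close>
definition errors :: "'a set \<Rightarrow> 'a set set \<Rightarrow> 'a set set \<Rightarrow> 'a \<Rightarrow> 'a set" where
  "errors V M C v = {u \<in> V. u \<noteq> v \<and>
     ((\<not> minus_edge M u v \<and> \<not> same_cluster C u v) \<or> (minus_edge M u v \<and> same_cluster C u v))}"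

end

theory Submission
  imports Defs
begin

theorem lemma1:
  fixes V :: "'a set" and M :: "'a set set" and C :: "'a set set" and t :: nat
  assumes "t > 0"
    and "finite V" and "card V = 2 * t"
    and "perfect_matching V M"
    and "partition_on V C" and "card C > 1"
  shows "\<exists>v\<in>V. card (errors V M C v) \<ge> t - 1"
proof -
  have PC: "partition_on V C" by fact
  have PM: "partition_on V M" "\<forall>e\<in>M. card e = 2" using assms(4) unfolding perfect_matching_def by auto
  obtain X Y where XY: "X \<in> C" "Y \<in> C" "X \<noteq> Y"
    proof -
    have "\<not> card C \<le> Suc 0" using assms(6) by simp
    have "\<not> (\<forall>a\<in>C. \<forall>b\<in>C. a = b)"
    proof
      assume "\<forall>a\<in>C. \<forall>b\<in>C. a = b"
      moreover have "finite C" using assms(6) card.infinite by fastforce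
      ultimately have "card C \<le> Suc 0" using card_le_Suc0_iff_eq by blast
      thus False using \<open>\<not> card C \<le> Suc 0\<close> by simp
    qed
    then show ?thesis using that by blast
  qed
  have disj: "X \<inter> Y = {}" using PC XY unfolding partition_on_def disjoint_def by auto
  have sub: "X \<subseteq> V" "Y \<subseteq> V" using PC XY unfolding partition_on_def by auto
  have "card X + card Y = card (X \<union> Y)"
    using disj sub assms(2) by (simp add: card_Un_disjoint finite_subset)
  also have "\<dots> \<le> 2 * t" using sub assms(2,3) by (metis Un_subset_iff card_mono)
  finally have "card X \<le> t \<or> card Y \<le> t" by linarith
  then obtain Z where Z: "Z \<in> C" "card Z \<le> t" using XY by auto
  have "Z \<noteq> {}" using PC Z unfolding partition_on_def by auto
  then obtain v where vZ: "v \<in> Z" by auto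
  have ZV: "Z \<subseteq> V" using PC Z unfolding partition_on_def by auto
  hence vV: "v \<in> V" using vZ by auto
  obtain e where e: "e \<in> M" "v \<in> e" using PM(1) vV unfolding partition_on_def by auto
  have ce: "card e = 2" using PM(2) e by auto
  have fe: "finite e" using ce card.infinite by fastforce
  have incl: "(V - Z) - (e - {v}) \<subseteq> errors V M C v"
  proof
    fix u assume u: "u \<in> (V - Z) - (e - {v})"
    have uv: "u \<noteq> v" using u vZ by auto
    have nm: "\<not> minus_edge M u v"
    proof
      assume "minus_edge M u v"
      hence "{u,v} \<in> M" unfolding minus_edge_def .
      moreover have "{u,v} = e"
      proof (rule ccontr)
        assume "{u,v} \<noteq> e"
        hence "{u,v} \<inter> e = {}" using PM(1) e calculation unfolding partition_on_def disjoint_def by metis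
        thus False using e(2) by auto
      qed
      ultimately show False using u uv by auto
    qed
    have ns: "\<not> same_cluster C u v"
    proof
      assume "same_cluster C u v"
      then obtain W where W: "W \<in> C" "u \<in> W" "v \<in> W" unfolding same_cluster_def by auto
      have "W = Z"
      proof (rule ccontr)
        assume "W \<noteq> Z"
        hence "W \<inter> Z = {}" using PC W Z unfolding partition_on_def disjoint_def by metis
        thus False using W vZ by auto
      qed
      thus False using u W by auto
    qed
    show "u \<in> errors V M C v" using u uv nm ns unfolding errors_def by auto
  qed
  have fin: "finite (errors V M C v)" using assms(2) unfolding errors_def by auto
  have "card (e - {v}) = 1" using ce e fe by simp
  have c1: "card (V - Z) = 2 * t - card Z" using ZV assms(2,3) by (simp add: card_Diff_subset finite_subset)
  have "card (V - Z) - 1 \<le> card ((V - Z) - (e - {v}))"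
    using \<open>card (e - {v}) = 1\<close> by (metis diff_card_le_card_Diff fe finite_Diff)
  also have "\<dots> \<le> card (errors V M C v)" using incl fin card_mono by blast
  finally show ?thesis using c1 Z vV by (intro bexI[of _ v]) auto
qed

end
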